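(* Let $S'$ be a finite poset that has an induced sub-poset isomorphic or anti-isomorphic to one of the posets $S_1,\dots,S_5$ below. Then there exists a stochastically monotone generator on $S'$ which is not realizably monotone. $S_1=\{w,a,b,c,d\}$: $w<a$, $a<b<d$, $a<c<d$, $b,c$ incomparable. $S_2=\{a,b,c,w,d\}$: $a<b<d$, $a<c<d$, $a<w<d$, $b,c,w$ pairwise incomparable. $S_3=\{a,b,c,w,d\}$: $a<b<d$, $a<c<w<d$, $b$ incomparable to $c,w$. $S_4=\{a,b,c,d,w\}$ with strict relations exactly $a<w,a<c,a<d,w<c,b<c,b<d$. $S_5=\{a,b,c,d,w\}$: $a,b<c,d<w$, with $a,b$ incomparable and $c,d$ incomparable.
   Context: A generator on a finite poset $S$ is a matrix $L$ with $L_{x,y}\ge0$ for $x\ne y$ and rows summing to $0$; $L_{x,\Gamma}=\sum_{z\in\Gamma}L_{x,z}$. $L$ is stochastically monotone iff for every up-set $\Gamma$ and $x\le y\notin\Gamma$, $L_{x,\Gamma}\le L_{y,\Gamma}$, and for every down-set $\Gamma$ and $y\ge x\notin\Gamma$, $L_{x,\Gamma}\ge L_{y,\Gamma}$. $L$ is realizably monotone iff there exists $\Lambda:\mathcal M\to[0,\infty)$, $\mathcal M$ the set of increasing maps $S\to S$, with $L_{x,y}=\sum_{f\in\mathcal M:f(x)=y}\Lambda(f)$ for all $x\ne y$. An induced sub-poset is a subset with the restricted order. *)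

theory Defs
  imports Complex_Main "HOL-Library.FuncSet"
begin

definition finite_poset :: "'a set \<Rightarrow> ('a \<Rightarrow> 'a \<Rightarrow> bool) \<Rightarrow> bool" where
  "finite_poset S le \<longleftrightarrow> finite S \<and>
     (\<forall>x\<in>S. le x x) \<and>
     (\<forall>x\<in>S. \<forall>y\<in>S. le x y \<and> le y x \<longrightarrow> x = y) \<and>
     (\<forall>x\<in>S. \<forall>y\<in>S. \<forall>z\<in>S. le x y \<and> le y z \<longrightarrow> le x z)"

definition generator :: "'a set \<Rightarrow> ('a \<Rightarrow> 'a \<Rightarrow> real) \<Rightarrow> bool" where
  "generator S L \<longleftrightarrow>
     (\<forall>x\<in>S. \<forall>y\<in>S. x \<noteq> y \<longrightarrow> L x y \<ge> 0) \<and>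
     (\<forall>x\<in>S. (\<Sum>y\<in>S. L x y) = 0)"

definition rate_to :: "('a \<Rightarrow> 'a \<Rightarrow> real) \<Rightarrow> 'a \<Rightarrow> 'a set \<Rightarrow> real" where
  "rate_to L x \<Gamma> = (\<Sum>z\<in>\<Gamma>. L x z)"

definition up_set :: "'a set \<Rightarrow> ('a \<Rightarrow> 'a \<Rightarrow> bool) \<Rightarrow> 'a set \<Rightarrow> bool" where
  "up_set S le \<Gamma> \<longleftrightarrow> \<Gamma> \<subseteq> S \<and> (\<forall>x\<in>\<Gamma>. \<forall>y\<in>S. le x y \<longrightarrow> y \<in> \<Gamma>)"

definition down_set :: "'a set \<Rightarrow> ('a \<Rightarrow> 'a \<Rightarrow> bool) \<Rightarrow> 'a set \<Rightarrow> bool" where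
  "down_set S le \<Gamma> \<longleftrightarrow> \<Gamma> \<subseteq> S \<and> (\<forall>x\<in>\<Gamma>. \<forall>y\<in>S. le y x \<longrightarrow> y \<in> \<Gamma>)"

definition stochastically_monotone ::
  "'a set \<Rightarrow> ('a \<Rightarrow> 'a \<Rightarrow> bool) \<Rightarrow> ('a \<Rightarrow> 'a \<Rightarrow> real) \<Rightarrow> bool" where
  "stochastically_monotone S le L \<longleftrightarrow>
     (\<forall>\<Gamma>. up_set S le \<Gamma> \<longrightarrow>
        (\<forall>x\<in>S. \<forall>y\<in>S. le x y \<and> y \<notin> \<Gamma> \<longrightarrow> rate_to L x \<Gamma> \<le> rate_to L y \<Gamma>)) \<and>
     (\<forall>\<Gamma>. down_set S le \<Gamma> \<longrightarrow>
        (\<forall>x\<in>S. \<forall>y\<in>S. le x y \<and> x \<notin> \<Gamma> \<longrightarrow> rate_to L x \<Gamma> \<ge> rate_to L y \<Gamma>))"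

text \<open>Increasing maps S \<rightarrow> S (extensional outside S, so that the set is finite).\<close>
definition increasing_maps :: "'a set \<Rightarrow> ('a \<Rightarrow> 'a \<Rightarrow> bool) \<Rightarrow> ('a \<Rightarrow> 'a) set" where
  "increasing_maps S le =
     {f \<in> S \<rightarrow>\<^sub>E S. \<forall>x\<in>S. \<forall>y\<in>S. le x y \<longrightarrow> le (f x) (f y)}"

definition realizably_monotone ::
  "'a set \<Rightarrow> ('a \<Rightarrow> 'a \<Rightarrow> bool) \<Rightarrow> ('a \<Rightarrow> 'a \<Rightarrow> real) \<Rightarrow> bool" where
  "realizably_monotone S le L \<longleftrightarrow>
     (\<exists>\<Lambda> :: ('a \<Rightarrow> 'a) \<Rightarrow> real.
        (\<forall>f\<in>increasing_maps S le. \<Lambda> f \<ge> 0) \<and>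
        (\<forall>x\<in>S. \<forall>y\<in>S. x \<noteq> y \<longrightarrow>
           L x y = (\<Sum>f\<in>{f \<in> increasing_maps S le. f x = y}. \<Lambda> f)))"

text \<open>S1: w=0, a=1, b=2, c=3, d=4; w<a, a<b<d, a<c<d.\<close>
definition P1_strict :: "(nat \<times> nat) set" where
  "P1_strict = {(0,1),(0,2),(0,3),(0,4),(1,2),(1,3),(1,4),(2,4),(3,4)}"

text \<open>S2: a=0, b=1, c=2, w=3, d=4; a<b,c,w<d.\<close>
definition P2_strict :: "(nat \<times> nat) set" where
  "P2_strict = {(0,1),(0,2),(0,3),(0,4),(1,4),(2,4),(3,4)}"

text \<open>S3: a=0, b=1, c=2, w=3, d=4; a<b<d, a<c<w<d.\<close>
definition P3_strict :: "(nat \<times> nat) set" where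
  "P3_strict = {(0,1),(0,2),(0,3),(0,4),(1,4),(2,3),(2,4),(3,4)}"

text \<open>S4: a=0, b=1, c=2, d=3, w=4; exactly a<w, a<c, a<d, w<c, b<c, b<d.\<close>
definition P4_strict :: "(nat \<times> nat) set" where
  "P4_strict = {(0,4),(0,2),(0,3),(4,2),(1,2),(1,3)}"

text \<open>S5: a=0, b=1, c=2, d=3, w=4; a,b < c,d < w.\<close>
definition P5_strict :: "(nat \<times> nat) set" where
  "P5_strict = {(0,2),(0,3),(0,4),(1,2),(1,3),(1,4),(2,4),(3,4)}"

definition le_of :: "(nat \<times> nat) set \<Rightarrow> nat \<Rightarrow> nat \<Rightarrow> bool" where
  "le_of R i j \<longleftrightarrow> i = j \<or> (i, j) \<in> R"

definition has_induced_copy ::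
  "'a set \<Rightarrow> ('a \<Rightarrow> 'a \<Rightarrow> bool) \<Rightarrow> (nat \<Rightarrow> nat \<Rightarrow> bool) \<Rightarrow> bool" where
  "has_induced_copy S le P \<longleftrightarrow>
     (\<exists>\<phi>. inj_on \<phi> {0..<5} \<and> \<phi> ` {0..<5} \<subseteq> S \<and>
        (\<forall>i\<in>{0..<5}. \<forall>j\<in>{0..<5}. le (\<phi> i) (\<phi> j) \<longleftrightarrow> P i j))"

definition has_induced_copy_or_dual ::
  "'a set \<Rightarrow> ('a \<Rightarrow> 'a \<Rightarrow> bool) \<Rightarrow> (nat \<Rightarrow> nat \<Rightarrow> bool) \<Rightarrow> bool" where
  "has_induced_copy_or_dual S le P \<longleftrightarrow>
     has_induced_copy S le P \<or> has_induced_copy S le (\<lambda>i j. P j i)"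

end

theory Submission
  imports Defs
begin


definition itemsA :: "(('a \<Rightarrow> bool) \<times> 'a) list \<Rightarrow> 'a \<Rightarrow> 'a \<Rightarrow> real" where
  "itemsA its x y = (if x = y then 0 else (\<Sum>(P,t)\<leftarrow>its. if P x \<and> y = t then 1 else 0))"

definition mkL :: "'a set \<Rightarrow> ('a \<Rightarrow> 'a \<Rightarrow> real) \<Rightarrow> 'a \<Rightarrow> 'a \<Rightarrow> real" where
  "mkL S A x y = (if x = y then - (\<Sum>z\<in>S-{x}. A x z) else A x y)"

lemma itemsA_nonneg: "itemsA its x y \<ge> 0"
  unfolding itemsA_def by (auto intro!: sum_list_nonneg split: prod.splits)

lemma itemsA_diag: "itemsA its x x = 0"
  unfolding itemsA_def by simp

lemma itemsA_sum:
  assumes "finite G" "x \<notin> G"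
  shows "(\<Sum>y\<in>G. itemsA its x y) = (\<Sum>(P,t)\<leftarrow>its. if P x \<and> t \<in> G then 1 else 0)"
proof (induction its)
  case Nil
  show ?case by (simp add: itemsA_def sum.neutral)
next
  case (Cons a its)
  obtain P t where a: "a = (P,t)" by fastforce
  have "(\<Sum>y\<in>G. itemsA (a#its) x y) = (\<Sum>y\<in>G. (if P x \<and> y = t then 1 else 0) + itemsA its x y)"
    using assms(2) by (intro sum.cong) (auto simp: itemsA_def a)
  also have "\<dots> = (\<Sum>y\<in>G. (if P x \<and> y = t then 1 else 0)) + (\<Sum>y\<in>G. itemsA its x y)"
    by (rule sum.distrib)
  also have "(\<Sum>y\<in>G. (if P x \<and> y = t then 1 else 0)) = (if P x \<and> t \<in> G then (1::real) else 0)"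
    using assms(1) by (cases "P x") (auto simp: sum.delta')
  finally show ?case using Cons by (simp add: a)
qed

lemma itemsA_pos:
  assumes "itemsA its x y > 0"
  shows "x \<noteq> y \<and> (\<exists>(P,t)\<in>set its. P x \<and> y = t)"
proof -
  have "x \<noteq> y" using assms by (auto simp: itemsA_def)
  moreover have "\<exists>(P,t)\<in>set its. P x \<and> y = t"
  proof (rule ccontr)
    assume "\<not> ?thesis"
    hence "(\<Sum>(P,t)\<leftarrow>its. if P x \<and> y = t then 1 else (0::real)) = 0"
      by (induction its) (auto split: if_splits)
    thus False using assms \<open>x\<noteq>y\<close> by (simp add: itemsA_def)
  qed
  ultimately show ?thesis by blast
qed

lemma mkL_generator:
  assumes "finite S" "\<And>x y. A x y \<ge> 0" "\<And>x. A x x = 0"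
  shows "generator S (mkL S A)"
  unfolding generator_def
proof safe
  fix x y assume "x \<in> S" "y \<in> S" "x \<noteq> y"
  thus "0 \<le> mkL S A x y" using assms by (simp add: mkL_def)
next
  fix x assume x: "x \<in> S"
  have "(\<Sum>y\<in>S. mkL S A x y) = mkL S A x x + (\<Sum>y\<in>S-{x}. mkL S A x y)"
    using x assms(1) by (simp add: sum.remove)
  also have "(\<Sum>y\<in>S-{x}. mkL S A x y) = (\<Sum>y\<in>S-{x}. A x y)"
    by (intro sum.cong) (auto simp: mkL_def)
  finally show "(\<Sum>y\<in>S. mkL S A x y) = 0" by (simp add: mkL_def)
qed

lemma itemsA_generator: "finite S \<Longrightarrow> generator S (mkL S (itemsA its))"
  by (rule mkL_generator) (auto simp: itemsA_nonneg itemsA_diag)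

lemma mkL_rate:
  assumes "x \<notin> G"
  shows "rate_to (mkL S A) x G = (\<Sum>y\<in>G. A x y)"
  unfolding rate_to_def using assms by (intro sum.cong) (auto simp: mkL_def)

lemma mkL_sm:
  assumes fin: "finite S"
    and up: "\<And>G x y. up_set S le G \<Longrightarrow> x \<in> S \<Longrightarrow> y \<in> S \<Longrightarrow> le x y \<Longrightarrow> x \<notin> G \<Longrightarrow> y \<notin> G \<Longrightarrow>
               (\<Sum>z\<in>G. A x z) \<le> (\<Sum>z\<in>G. A y z)"
    and dn: "\<And>G x y. down_set S le G \<Longrightarrow> x \<in> S \<Longrightarrow> y \<in> S \<Longrightarrow> le x y \<Longrightarrow> x \<notin> G \<Longrightarrow> y \<notin> G \<Longrightarrow>
               (\<Sum>z\<in>G. A x z) \<ge> (\<Sum>z\<in>G. A y z)"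
  shows "stochastically_monotone S le (mkL S A)"
  unfolding stochastically_monotone_def
proof safe
  fix G x y assume G: "up_set S le G" and xy: "x \<in> S" "y \<in> S" "le x y" "y \<notin> G"
  have "x \<notin> G" using G xy unfolding up_set_def by blast
  thus "rate_to (mkL S A) x G \<le> rate_to (mkL S A) y G"
    using up[OF G xy(1,2,3) _ xy(4)] xy by (simp add: mkL_rate)
next
  fix G x y assume G: "down_set S le G" and xy: "x \<in> S" "y \<in> S" "le x y" "x \<notin> G"
  have "y \<notin> G" using G xy unfolding down_set_def by blast
  thus "rate_to (mkL S A) y G \<le> rate_to (mkL S A) x G"
    using dn[OF G xy(1,2,3) xy(4)] xy by (simp add: mkL_rate)
qed

lemma finite_incr: "finite S \<Longrightarrow> finite (increasing_maps S le)"
  unfolding increasing_maps_def by (rule finite_subset[OF _ finite_PiE[of S "\<lambda>_. S"]]) auto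

lemma real_pos:
  fixes \<Lambda> :: "('a \<Rightarrow> 'a) \<Rightarrow> real"
  assumes fin: "finite S"
    and nn: "\<forall>f\<in>increasing_maps S le. \<Lambda> f \<ge> 0"
    and eq: "\<forall>x\<in>S. \<forall>y\<in>S. x \<noteq> y \<longrightarrow> L x y = (\<Sum>f\<in>{f \<in> increasing_maps S le. f x = y}. \<Lambda> f)"
    and f: "f \<in> increasing_maps S le" "\<Lambda> f \<noteq> 0" and x: "x \<in> S" "f x \<noteq> x"
  shows "L x (f x) > 0"
proof -
  have fx: "f x \<in> S" using f(1) x unfolding increasing_maps_def by auto
  have "\<Lambda> f \<le> (\<Sum>g\<in>{g \<in> increasing_maps S le. g x = f x}. \<Lambda> g)"
    by (rule member_le_sum[of f]) (use nn f(1) finite_incr[OF fin, of le] in auto)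
  moreover have "\<Lambda> f > 0" using nn f by force
  ultimately show ?thesis using eq x fx by force
qed



lemma poset_facts:
  assumes "finite_poset S le"
  shows "finite S" "\<And>x. x \<in> S \<Longrightarrow> le x x"
    "\<And>x y z. x \<in> S \<Longrightarrow> y \<in> S \<Longrightarrow> z \<in> S \<Longrightarrow> le x y \<Longrightarrow> le y z \<Longrightarrow> le x z"
  using assms unfolding finite_poset_def by blast+

lemma sum_M_le:
  fixes \<Lambda> :: "('a \<Rightarrow> 'a) \<Rightarrow> real"
  assumes "finite M" "\<And>f. f \<in> M \<Longrightarrow> \<Lambda> f \<noteq> 0 \<Longrightarrow> (P1 f \<or> P2 f \<longrightarrow> Q f) \<and> \<not> (P1 f \<and> P2 f)"
    "\<forall>f\<in>M. \<Lambda> f \<ge> 0"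
  shows "(\<Sum>f\<in>{f\<in>M. P1 f}. \<Lambda> f) + (\<Sum>f\<in>{f\<in>M. P2 f}. \<Lambda> f) \<le> (\<Sum>f\<in>{f\<in>M. Q f}. \<Lambda> f)"
proof -
  have "(\<Sum>f\<in>{f\<in>M. P1 f}. \<Lambda> f) + (\<Sum>f\<in>{f\<in>M. P2 f}. \<Lambda> f) =
        (\<Sum>f\<in>M. (if P1 f then \<Lambda> f else 0) + (if P2 f then \<Lambda> f else 0))"
    using assms(1) by (simp add: sum.inter_filter[symmetric] sum.distrib)
  also have "\<dots> \<le> (\<Sum>f\<in>M. if Q f then \<Lambda> f else 0)"
  proof (rule sum_mono)
    fix f assume "f \<in> M"
    thus "(if P1 f then \<Lambda> f else 0) + (if P2 f then \<Lambda> f else 0) \<le> (if Q f then \<Lambda> f else 0)"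
      using assms(2)[of f] assms(3) by (cases "\<Lambda> f = 0") auto
  qed
  also have "\<dots> = (\<Sum>f\<in>{f\<in>M. Q f}. \<Lambda> f)"
    using assms(1) by (simp add: sum.inter_filter)
  finally show ?thesis .
qed

lemma gadgetG:
  assumes po: "finite_poset S le"
    and inS: "p \<in> S" "q1 \<in> S" "q2 \<in> S" "r \<in> S" "t \<in> S"
    and rel: "le p q1" "le p q2" "\<not> le q1 q2" "\<not> le q2 q1" "le q1 t" "le q2 t"
      "le r q1" "le r q2" "\<not> le r p"
  shows "\<exists>L. generator S L \<and> stochastically_monotone S le L \<and> \<not> realizably_monotone S le L"
proof -
  note pf = poset_facts[OF po]
  define P where "P z \<longleftrightarrow> le z q1 \<or> le z q2" for z
  define its where "its = [(P, p), (\<lambda>z. \<not> P z, q1), (\<lambda>z. \<not> P z, q2)]"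
  define L where "L = mkL S (itemsA its)"
  have rate: "(\<Sum>y\<in>G. itemsA its z y) = (if P z \<and> p \<in> G then 1 else 0) +
      (if \<not> P z \<and> q1 \<in> G then 1 else 0) + (if \<not> P z \<and> q2 \<in> G then 1 else 0)"
    if "G \<subseteq> S" "z \<notin> G" for G z
    using itemsA_sum[of G z its] finite_subset[OF that(1) pf(1)] that by (simp add: its_def)
  have gen: "generator S L"
    unfolding L_def by (rule itemsA_generator[OF pf(1)])
  have sm: "stochastically_monotone S le L"
    unfolding L_def
  proof (rule mkL_sm[OF pf(1)])
    fix G x y assume G: "up_set S le G" and xy: "x \<in> S" "y \<in> S" "le x y" "x \<notin> G" "y \<notin> G"
    have GS: "G \<subseteq> S" using G by (simp add: up_set_def)
    have up: "\<And>u v. u \<in> G \<Longrightarrow> v \<in> S \<Longrightarrow> le u v \<Longrightarrow> v \<in> G" using G by (auto simp: up_set_def)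
    have Pxy: "P y \<Longrightarrow> P x" unfolding P_def using pf(3)[OF xy(1,2) inS(2) xy(3)] pf(3)[OF xy(1,2) inS(3) xy(3)] by blast
    have pq: "p \<in> G \<Longrightarrow> q1 \<in> G" using up[OF _ inS(2) rel(1)] by blast
    show "(\<Sum>z\<in>G. itemsA its x z) \<le> (\<Sum>z\<in>G. itemsA its y z)"
      unfolding rate[OF GS xy(4)] rate[OF GS xy(5)]
      using Pxy pq by (cases "P x"; cases "P y") auto
  next
    fix G x y assume G: "down_set S le G" and xy: "x \<in> S" "y \<in> S" "le x y" "x \<notin> G" "y \<notin> G"
    have GS: "G \<subseteq> S" using G by (simp add: down_set_def)
    have dn: "\<And>u v. u \<in> G \<Longrightarrow> v \<in> S \<Longrightarrow> le v u \<Longrightarrow> v \<in> G" using G by (auto simp: down_set_def)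
    have Pxy: "P y \<Longrightarrow> P x" unfolding P_def using pf(3)[OF xy(1,2) inS(2) xy(3)] pf(3)[OF xy(1,2) inS(3) xy(3)] by blast
    have q1p: "q1 \<in> G \<Longrightarrow> p \<in> G" using dn[OF _ inS(1) rel(1)] by blast
    have q2p: "q2 \<in> G \<Longrightarrow> p \<in> G" using dn[OF _ inS(1) rel(2)] by blast
    have x1: "le x q1 \<Longrightarrow> q1 \<notin> G" using dn[OF _ xy(1)] xy(4) by blast
    have x2: "le x q2 \<Longrightarrow> q2 \<notin> G" using dn[OF _ xy(1)] xy(4) by blast
    show "(\<Sum>z\<in>G. itemsA its x z) \<ge> (\<Sum>z\<in>G. itemsA its y z)"
      unfolding rate[OF GS xy(4)] rate[OF GS xy(5)]
      using Pxy q1p q2p x1 x2 unfolding P_def by (cases "le x q1"; cases "le x q2"; cases "le y q1 \<or> le y q2") auto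
  qed
  have nr: "\<not> realizably_monotone S le L"
  proof
    assume "realizably_monotone S le L"
    then obtain \<Lambda> :: "('a \<Rightarrow> 'a) \<Rightarrow> real" where nn: "\<forall>f\<in>increasing_maps S le. \<Lambda> f \<ge> 0"
      and eq: "\<forall>x\<in>S. \<forall>y\<in>S. x \<noteq> y \<longrightarrow> L x y = (\<Sum>f\<in>{f \<in> increasing_maps S le. f x = y}. \<Lambda> f)"
      unfolding realizably_monotone_def by blast
    define M where "M = increasing_maps S le"
    have finM: "finite M" unfolding M_def by (rule finite_incr[OF pf(1)])
    have Aval: "itemsA its u v > 0 \<Longrightarrow> u \<noteq> v \<and> ((P u \<and> v = p) \<or> (\<not> P u \<and> (v = q1 \<or> v = q2)))" for u v
      using itemsA_pos[of its u v] by (auto simp: its_def)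
    have tgt: "f \<in> M \<Longrightarrow> \<Lambda> f \<noteq> 0 \<Longrightarrow> u \<in> S \<Longrightarrow> f u \<noteq> u \<Longrightarrow>
        (P u \<and> f u = p) \<or> (\<not> P u \<and> (f u = q1 \<or> f u = q2))" for f u
      using real_pos[OF pf(1) nn eq, of f u] Aval[of u "f u"] by (auto simp: M_def L_def mkL_def)
    have fS: "f \<in> M \<Longrightarrow> u \<in> S \<Longrightarrow> f u \<in> S" for f u by (auto simp: M_def increasing_maps_def)
    have fm: "f \<in> M \<Longrightarrow> u \<in> S \<Longrightarrow> v \<in> S \<Longrightarrow> le u v \<Longrightarrow> le (f u) (f v)" for f u v
      by (auto simp: M_def increasing_maps_def)
    have Pr: "P r" "P q1" "P q2" "\<not> P t" 
      using rel pf(2)[OF inS(2)] pf(2)[OF inS(3)] pf(3)[OF inS(3,5,2)] pf(3)[OF inS(2,5,3)] unfolding P_def by auto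
    have key: "(f t = q1 \<or> f t = q2 \<longrightarrow> f r = p) \<and> \<not> (f t = q1 \<and> f t = q2)"
      if f: "f \<in> M" "\<Lambda> f \<noteq> 0" for f
    proof -
      have "f r = p" if ft: "f t = q1"
      proof -
        have "le (f q2) q1" using fm[OF f(1) inS(3,5) rel(6)] ft by simp
        hence "f q2 \<noteq> q2" using rel by auto
        hence "f q2 = p" using tgt[OF f inS(3)] Pr by auto
        hence "le (f r) p" using fm[OF f(1) inS(4,3) rel(8)] by simp
        hence "f r \<noteq> r" using rel by auto
        thus "f r = p" using tgt[OF f inS(4)] Pr by auto
      qed
      moreover have "f r = p" if ft: "f t = q2"
      proof -
        have "le (f q1) q2" using fm[OF f(1) inS(2,5) rel(5)] ft by simp
        hence "f q1 \<noteq> q1" using rel by auto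
        hence "f q1 = p" using tgt[OF f inS(2)] Pr by auto
        hence "le (f r) p" using fm[OF f(1) inS(4,2) rel(7)] by simp
        hence "f r \<noteq> r" using rel by auto
        thus "f r = p" using tgt[OF f inS(4)] Pr by auto
      qed
      moreover have "q1 \<noteq> q2" using rel(3) pf(2)[OF inS(2)] by auto
      ultimately show ?thesis by blast
    qed
    have ineq: "(\<Sum>f\<in>{f\<in>M. f t = q1}. \<Lambda> f) + (\<Sum>f\<in>{f\<in>M. f t = q2}. \<Lambda> f) \<le> (\<Sum>f\<in>{f\<in>M. f r = p}. \<Lambda> f)"
      by (rule sum_M_le[OF finM key]) (use nn M_def in auto)
    have ne: "t \<noteq> q1" "t \<noteq> q2" "r \<noteq> p" "q1 \<noteq> q2" using rel(4,3,6,5,9) pf(2)[OF inS(4)] pf(2)[OF inS(2)] by auto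
    have v1: "L t q1 = 1" "L t q2 = 1" "L r p = 1"
      using ne Pr by (auto simp: L_def mkL_def itemsA_def its_def)
    have "L t q1 + L t q2 \<le> L r p"
      using ineq eq inS ne unfolding M_def by simp
    thus False using v1 by simp
  qed
  show ?thesis using gen sm nr by blast
qed



lemma gadget2:
  assumes po: "finite_poset S le"
    and inS: "a \<in> S" "b \<in> S" "c \<in> S" "w \<in> S" "d \<in> S"
    and rel: "le a b" "le a w" "le a d" "le b d" "le w d" "le a c" "le c d"
      "\<not> le b a" "\<not> le c b" "\<not> le b c" "\<not> le w b" "\<not> le b w" "\<not> le d b"
      "\<not> le w c" "\<not> le w a" "\<not> le d w"
  shows "\<exists>L. generator S L \<and> stochastically_monotone S le L \<and> \<not> realizably_monotone S le L"
proof -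
  note pf = poset_facts[OF po]
  define its where "its = [(\<lambda>z. \<not> le z b, d), (\<lambda>z. le b z, w), (\<lambda>z. \<not> le b z, a), (\<lambda>z. le z b \<and> \<not> le b z, w)]"
  define L where "L = mkL S (itemsA its)"
  have rate: "(\<Sum>y\<in>G. itemsA its z y) = (if \<not> le z b \<and> d \<in> G then 1 else 0) +
      (if le b z \<and> w \<in> G then 1 else 0) + (if \<not> le b z \<and> a \<in> G then 1 else 0) +
      (if (le z b \<and> \<not> le b z) \<and> w \<in> G then 1 else 0)"
    if "G \<subseteq> S" "z \<notin> G" for G z
    using itemsA_sum[of G z its] finite_subset[OF that(1) pf(1)] that by (simp add: its_def)
  have gen: "generator S L"
    unfolding L_def by (rule itemsA_generator[OF pf(1)])
  have sm: "stochastically_monotone S le L"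
    unfolding L_def
  proof (rule mkL_sm[OF pf(1)])
    fix G x y assume G: "up_set S le G" and xy: "x \<in> S" "y \<in> S" "le x y" "x \<notin> G" "y \<notin> G"
    have GS: "G \<subseteq> S" using G by (simp add: up_set_def)
    have up: "\<And>u v. u \<in> G \<Longrightarrow> v \<in> S \<Longrightarrow> le u v \<Longrightarrow> v \<in> G" using G by (auto simp: up_set_def)
    have t1: "le b x \<Longrightarrow> le b y" using pf(3)[OF inS(2) xy(1,2)] xy(3) by blast
    have t2: "le y b \<Longrightarrow> le x b" using pf(3)[OF xy(1,2) inS(2)] xy(3) by blast
    have f1: "le b y \<Longrightarrow> a \<in> G \<Longrightarrow> False" using up[OF _ inS(2) rel(1)] up[OF _ xy(2)] xy(5) by blast
    have f2: "w \<in> G \<Longrightarrow> d \<in> G" using up[OF _ inS(5) rel(5)] by blast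
    show "(\<Sum>z\<in>G. itemsA its x z) \<le> (\<Sum>z\<in>G. itemsA its y z)"
      unfolding rate[OF GS xy(4)] rate[OF GS xy(5)]
      using t1 t2 f1 f2 by (cases "le b x"; cases "le b y"; cases "le x b"; cases "le y b") auto
  next
    fix G x y assume G: "down_set S le G" and xy: "x \<in> S" "y \<in> S" "le x y" "x \<notin> G" "y \<notin> G"
    have GS: "G \<subseteq> S" using G by (simp add: down_set_def)
    have dn: "\<And>u v. u \<in> G \<Longrightarrow> v \<in> S \<Longrightarrow> le v u \<Longrightarrow> v \<in> G" using G by (auto simp: down_set_def)
    have t1: "le b x \<Longrightarrow> le b y" using pf(3)[OF inS(2) xy(1,2)] xy(3) by blast
    have t2: "le y b \<Longrightarrow> le x b" using pf(3)[OF xy(1,2) inS(2)] xy(3) by blast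
    have f1: "le x b \<Longrightarrow> d \<in> G \<Longrightarrow> False"
      using dn[OF _ inS(2) rel(4)] dn[OF _ xy(1)] xy(4) by blast
    have f2: "d \<in> G \<Longrightarrow> a \<in> G" "d \<in> G \<Longrightarrow> w \<in> G" "w \<in> G \<Longrightarrow> a \<in> G"
      using dn[OF _ inS(1) rel(3)] dn[OF _ inS(4) rel(5)] dn[OF _ inS(1) rel(2)] by blast+
    show "(\<Sum>z\<in>G. itemsA its x z) \<ge> (\<Sum>z\<in>G. itemsA its y z)"
      unfolding rate[OF GS xy(4)] rate[OF GS xy(5)]
      using t1 t2 f1 f2 by (cases "le b x"; cases "le b y"; cases "le x b"; cases "le y b") auto
  qed
  have nr: "\<not> realizably_monotone S le L"
  proof
    assume "realizably_monotone S le L"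
    then obtain \<Lambda> :: "('a \<Rightarrow> 'a) \<Rightarrow> real" where nn: "\<forall>f\<in>increasing_maps S le. \<Lambda> f \<ge> 0"
      and eq: "\<forall>x\<in>S. \<forall>y\<in>S. x \<noteq> y \<longrightarrow> L x y = (\<Sum>f\<in>{f \<in> increasing_maps S le. f x = y}. \<Lambda> f)"
      unfolding realizably_monotone_def by blast
    define M where "M = increasing_maps S le"
    have finM: "finite M" unfolding M_def by (rule finite_incr[OF pf(1)])
    have Aval: "itemsA its u v > 0 \<Longrightarrow> (\<not> le u b \<and> v = d) \<or> (le b u \<and> v = w) \<or>
        (\<not> le b u \<and> v = a) \<or> (le u b \<and> \<not> le b u \<and> v = w)" for u v
      using itemsA_pos[of its u v] by (auto simp: its_def)
    have tgt: "f \<in> M \<Longrightarrow> \<Lambda> f \<noteq> 0 \<Longrightarrow> u \<in> S \<Longrightarrow> f u \<noteq> u \<Longrightarrow>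
        (\<not> le u b \<and> f u = d) \<or> (le b u \<and> f u = w) \<or>
        (\<not> le b u \<and> f u = a) \<or> (le u b \<and> \<not> le b u \<and> f u = w)" for f u
      using real_pos[OF pf(1) nn eq, of f u] Aval[of u "f u"] by (auto simp: M_def L_def mkL_def)
    have fm: "f \<in> M \<Longrightarrow> u \<in> S \<Longrightarrow> v \<in> S \<Longrightarrow> le u v \<Longrightarrow> le (f u) (f v)" for f u v
      by (auto simp: M_def increasing_maps_def)
    have bb: "le b b" "le w w" "le d d" using pf(2) inS by auto
    have key: "(f a = w \<or> f d = w \<longrightarrow> f b = w) \<and> \<not> (f a = w \<and> f d = w)"
      if f: "f \<in> M" "\<Lambda> f \<noteq> 0" for f
    proof -
      have "f b = w" if ft: "f a = w"
      proof -
        have "le w (f b)" using fm[OF f(1) inS(1,2) rel(1)] ft by simp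
        hence "f b \<noteq> b" using rel by auto
        thus "f b = w" using tgt[OF f inS(2)] bb by auto
      qed
      moreover have "f b = w" if ft: "f d = w"
      proof -
        have "le (f b) w" using fm[OF f(1) inS(2,5) rel(4)] ft by simp
        hence "f b \<noteq> b" using rel by auto
        thus "f b = w" using tgt[OF f inS(2)] bb by auto
      qed
      moreover have False if ft: "f a = w" "f d = w"
      proof -
        have 1: "le w (f c)" using fm[OF f(1) inS(1,3) rel(6)] ft by simp
        have 2: "le (f c) w" using fm[OF f(1) inS(3,5) rel(7)] ft by simp
        have "f c \<noteq> c" using 1 rel by auto
        hence "f c = d \<or> f c = a" using tgt[OF f inS(3)] rel(9,10) by auto
        thus False using 1 2 rel by auto
      qed
      ultimately show ?thesis by blast
    qed
    have ineq: "(\<Sum>f\<in>{f\<in>M. f a = w}. \<Lambda> f) + (\<Sum>f\<in>{f\<in>M. f d = w}. \<Lambda> f) \<le> (\<Sum>f\<in>{f\<in>M. f b = w}. \<Lambda> f)"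
      by (rule sum_M_le[OF finM key]) (use nn M_def in auto)
    have ne: "a \<noteq> w" "d \<noteq> w" "b \<noteq> w" using rel bb by auto
    have v1: "L a w = 1" "L d w = 1" "L b w = 1"
      using ne bb rel by (auto simp: L_def mkL_def itemsA_def its_def)
    have "L a w + L d w \<le> L b w"
      using ineq eq inS ne unfolding M_def by simp
    thus False using v1 by simp
  qed
  show ?thesis using gen sm nr by blast
qed



lemma gadget3:
  assumes po: "finite_poset S le"
    and inS: "a \<in> S" "b \<in> S" "c \<in> S" "w \<in> S" "d \<in> S"
    and rel: "le a b" "le a c" "le b d" "le c w" "le w d"
      "\<not> le c b" "\<not> le b c" "\<not> le w c" "\<not> le b w" "\<not> le c a"
  shows "\<exists>L. generator S L \<and> stochastically_monotone S le L \<and> \<not> realizably_monotone S le L"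
proof -
  note pf = poset_facts[OF po]
  define its where "its = [(\<lambda>z. \<not> le b z, a), (\<lambda>z. le b z \<or> \<not> le c z, c)]"
  define L where "L = mkL S (itemsA its)"
  have rate: "(\<Sum>y\<in>G. itemsA its z y) = (if \<not> le b z \<and> a \<in> G then 1 else 0) +
      (if (le b z \<or> \<not> le c z) \<and> c \<in> G then 1 else 0)"
    if "G \<subseteq> S" "z \<notin> G" for G z
    using itemsA_sum[of G z its] finite_subset[OF that(1) pf(1)] that by (simp add: its_def)
  have gen: "generator S L"
    unfolding L_def by (rule itemsA_generator[OF pf(1)])
  have sm: "stochastically_monotone S le L"
    unfolding L_def
  proof (rule mkL_sm[OF pf(1)])
    fix G x y assume G: "up_set S le G" and xy: "x \<in> S" "y \<in> S" "le x y" "x \<notin> G" "y \<notin> G"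
    have GS: "G \<subseteq> S" using G by (simp add: up_set_def)
    have up: "\<And>u v. u \<in> G \<Longrightarrow> v \<in> S \<Longrightarrow> le u v \<Longrightarrow> v \<in> G" using G by (auto simp: up_set_def)
    have t1: "le b x \<Longrightarrow> le b y" using pf(3)[OF inS(2) xy(1,2)] xy(3) by blast
    have t2: "le c x \<Longrightarrow> le c y" using pf(3)[OF inS(3) xy(1,2)] xy(3) by blast
    have ab: "a \<in> G \<Longrightarrow> le b y \<Longrightarrow> False" using up[OF _ inS(2) rel(1)] up[OF _ xy(2)] xy(5) by blast
    have cy: "c \<in> G \<Longrightarrow> le c y \<Longrightarrow> False" using up[OF _ xy(2)] xy(5) by blast
    show "(\<Sum>z\<in>G. itemsA its x z) \<le> (\<Sum>z\<in>G. itemsA its y z)"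
      unfolding rate[OF GS xy(4)] rate[OF GS xy(5)]
      using t1 t2 ab cy by (cases "le b x"; cases "le b y"; cases "le c x"; cases "le c y") auto
  next
    fix G x y assume G: "down_set S le G" and xy: "x \<in> S" "y \<in> S" "le x y" "x \<notin> G" "y \<notin> G"
    have GS: "G \<subseteq> S" using G by (simp add: down_set_def)
    have dn: "\<And>u v. u \<in> G \<Longrightarrow> v \<in> S \<Longrightarrow> le v u \<Longrightarrow> v \<in> G" using G by (auto simp: down_set_def)
    have t1: "le b x \<Longrightarrow> le b y" using pf(3)[OF inS(2) xy(1,2)] xy(3) by blast
    have t2: "le c x \<Longrightarrow> le c y" using pf(3)[OF inS(3) xy(1,2)] xy(3) by blast
    have cx: "c \<in> G \<Longrightarrow> a \<in> G" using dn[OF _ inS(1) rel(2)] by blast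
    show "(\<Sum>z\<in>G. itemsA its x z) \<ge> (\<Sum>z\<in>G. itemsA its y z)"
      unfolding rate[OF GS xy(4)] rate[OF GS xy(5)]
      using t1 t2 cx by (cases "le b x"; cases "le b y"; cases "le c x"; cases "le c y") auto
  qed
  have nr: "\<not> realizably_monotone S le L"
  proof
    assume "realizably_monotone S le L"
    then obtain \<Lambda> :: "('a \<Rightarrow> 'a) \<Rightarrow> real" where nn: "\<forall>f\<in>increasing_maps S le. \<Lambda> f \<ge> 0"
      and eq: "\<forall>x\<in>S. \<forall>y\<in>S. x \<noteq> y \<longrightarrow> L x y = (\<Sum>f\<in>{f \<in> increasing_maps S le. f x = y}. \<Lambda> f)"
      unfolding realizably_monotone_def by blast
    define M where "M = increasing_maps S le"
    have finM: "finite M" unfolding M_def by (rule finite_incr[OF pf(1)])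
    have Aval: "itemsA its u v > 0 \<Longrightarrow> (\<not> le b u \<and> v = a) \<or> ((le b u \<or> \<not> le c u) \<and> v = c)" for u v
      using itemsA_pos[of its u v] by (auto simp: its_def)
    have tgt: "f \<in> M \<Longrightarrow> \<Lambda> f \<noteq> 0 \<Longrightarrow> u \<in> S \<Longrightarrow> f u \<noteq> u \<Longrightarrow>
        (\<not> le b u \<and> f u = a) \<or> ((le b u \<or> \<not> le c u) \<and> f u = c)" for f u
      using real_pos[OF pf(1) nn eq, of f u] Aval[of u "f u"] by (auto simp: M_def L_def mkL_def)
    have fm: "f \<in> M \<Longrightarrow> u \<in> S \<Longrightarrow> v \<in> S \<Longrightarrow> le u v \<Longrightarrow> le (f u) (f v)" for f u v
      by (auto simp: M_def increasing_maps_def)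
    have bb: "le b b" "le c c" using pf(2) inS by auto
    have key: "(f a = c \<or> f d = c \<longrightarrow> f b = c) \<and> \<not> (f a = c \<and> f d = c)"
      if f: "f \<in> M" "\<Lambda> f \<noteq> 0" for f
    proof -
      have "f b = c" if ft: "f a = c"
      proof -
        have "le c (f b)" using fm[OF f(1) inS(1,2) rel(1)] ft by simp
        hence "f b \<noteq> b" using rel by auto
        thus "f b = c" using tgt[OF f inS(2)] bb by auto
      qed
      moreover have "f b = c" if ft: "f d = c"
      proof -
        have "le (f b) c" using fm[OF f(1) inS(2,5) rel(3)] ft by simp
        hence "f b \<noteq> b" using rel by auto
        thus "f b = c" using tgt[OF f inS(2)] bb by auto
      qed
      moreover have False if ft: "f d = c" "f a = c"
      proof -
        have "le (f w) c" using fm[OF f(1) inS(4,5) rel(5)] ft by simp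
        hence "f w \<noteq> w" using rel by auto
        hence "f w = a" using tgt[OF f inS(4)] rel(4,9) by auto
        hence "le (f c) a" using fm[OF f(1) inS(3,4) rel(4)] by simp
        hence "f c \<noteq> c" using rel by auto
        hence "f c = a" using tgt[OF f inS(3)] rel bb by auto
        moreover have "le (f a) (f c)" using fm[OF f(1) inS(1,3) rel(2)] .
        ultimately show False using ft rel by simp
      qed
      ultimately show ?thesis by blast
    qed
    have ineq: "(\<Sum>f\<in>{f\<in>M. f a = c}. \<Lambda> f) + (\<Sum>f\<in>{f\<in>M. f d = c}. \<Lambda> f) \<le> (\<Sum>f\<in>{f\<in>M. f b = c}. \<Lambda> f)"
      by (rule sum_M_le[OF finM key]) (use nn M_def in auto)
    have ne: "a \<noteq> c" "d \<noteq> c" "b \<noteq> c" using rel(10,7,3) bb by auto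
    have bd: "le b d" by (rule rel(3))
    have v1: "L a c = 1" "L d c = 1" "L b c = 1"
      using ne bb bd rel(10) by (auto simp: L_def mkL_def itemsA_def its_def)
    have "L a c + L d c \<le> L b c"
      using ineq eq inS ne unfolding M_def by simp
    thus False using v1 by simp
  qed
  show ?thesis using gen sm nr by blast
qed

lemma gadget4:
  assumes po: "finite_poset S le"
    and inS: "a \<in> S" "b \<in> S" "c \<in> S" "d \<in> S" "w \<in> S"
    and rel: "le b c" "le b d" "le a w" "le w c" "le a d"
      "\<not> le d c" "\<not> le a b" "\<not> le b w" "\<not> le d b" "\<not> le w d" "\<not> le c d" "\<not> le b a"
  shows "\<exists>L. generator S L \<and> stochastically_monotone S le L \<and> \<not> realizably_monotone S le L"
proof -
  note pf = poset_facts[OF po]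
  define its where "its = [(\<lambda>z. le z d, b), (\<lambda>z. le b z \<or> \<not> le z d, d)]"
  define L where "L = mkL S (itemsA its)"
  have rate: "(\<Sum>y\<in>G. itemsA its z y) = (if le z d \<and> b \<in> G then 1 else 0) +
      (if (le b z \<or> \<not> le z d) \<and> d \<in> G then 1 else 0)"
    if "G \<subseteq> S" "z \<notin> G" for G z
    using itemsA_sum[of G z its] finite_subset[OF that(1) pf(1)] that by (simp add: its_def)
  have gen: "generator S L"
    unfolding L_def by (rule itemsA_generator[OF pf(1)])
  have sm: "stochastically_monotone S le L"
    unfolding L_def
  proof (rule mkL_sm[OF pf(1)])
    fix G x y assume G: "up_set S le G" and xy: "x \<in> S" "y \<in> S" "le x y" "x \<notin> G" "y \<notin> G"
    have GS: "G \<subseteq> S" using G by (simp add: up_set_def)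
    have up: "\<And>u v. u \<in> G \<Longrightarrow> v \<in> S \<Longrightarrow> le u v \<Longrightarrow> v \<in> G" using G by (auto simp: up_set_def)
    have t1: "le b x \<Longrightarrow> le b y" using pf(3)[OF inS(2) xy(1,2)] xy(3) by blast
    have t2: "le y d \<Longrightarrow> le x d" using pf(3)[OF xy(1,2) inS(4)] xy(3) by blast
    have bd: "b \<in> G \<Longrightarrow> d \<in> G" using up[OF _ inS(4) rel(2)] by blast
    have by': "b \<in> G \<Longrightarrow> le b y \<Longrightarrow> False" using up[OF _ xy(2)] xy(5) by blast
    show "(\<Sum>z\<in>G. itemsA its x z) \<le> (\<Sum>z\<in>G. itemsA its y z)"
      unfolding rate[OF GS xy(4)] rate[OF GS xy(5)]
      using t1 t2 bd by' by (cases "le b x"; cases "le b y"; cases "le x d"; cases "le y d") auto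
  next
    fix G x y assume G: "down_set S le G" and xy: "x \<in> S" "y \<in> S" "le x y" "x \<notin> G" "y \<notin> G"
    have GS: "G \<subseteq> S" using G by (simp add: down_set_def)
    have dn: "\<And>u v. u \<in> G \<Longrightarrow> v \<in> S \<Longrightarrow> le v u \<Longrightarrow> v \<in> G" using G by (auto simp: down_set_def)
    have t1: "le b x \<Longrightarrow> le b y" using pf(3)[OF inS(2) xy(1,2)] xy(3) by blast
    have t2: "le y d \<Longrightarrow> le x d" using pf(3)[OF xy(1,2) inS(4)] xy(3) by blast
    have dx: "d \<in> G \<Longrightarrow> le x d \<Longrightarrow> False" using dn[OF _ xy(1)] xy(4) by blast
    show "(\<Sum>z\<in>G. itemsA its x z) \<ge> (\<Sum>z\<in>G. itemsA its y z)"
      unfolding rate[OF GS xy(4)] rate[OF GS xy(5)]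
      using t1 t2 dx by (cases "le b x"; cases "le b y"; cases "le x d"; cases "le y d") auto
  qed
  have nr: "\<not> realizably_monotone S le L"
  proof
    assume "realizably_monotone S le L"
    then obtain \<Lambda> :: "('a \<Rightarrow> 'a) \<Rightarrow> real" where nn: "\<forall>f\<in>increasing_maps S le. \<Lambda> f \<ge> 0"
      and eq: "\<forall>x\<in>S. \<forall>y\<in>S. x \<noteq> y \<longrightarrow> L x y = (\<Sum>f\<in>{f \<in> increasing_maps S le. f x = y}. \<Lambda> f)"
      unfolding realizably_monotone_def by blast
    define M where "M = increasing_maps S le"
    have finM: "finite M" unfolding M_def by (rule finite_incr[OF pf(1)])
    have Aval: "itemsA its u v > 0 \<Longrightarrow> (le u d \<and> v = b) \<or> ((le b u \<or> \<not> le u d) \<and> v = d)" for u v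
      using itemsA_pos[of its u v] by (auto simp: its_def)
    have tgt: "f \<in> M \<Longrightarrow> \<Lambda> f \<noteq> 0 \<Longrightarrow> u \<in> S \<Longrightarrow> f u \<noteq> u \<Longrightarrow>
        (le u d \<and> f u = b) \<or> ((le b u \<or> \<not> le u d) \<and> f u = d)" for f u
      using real_pos[OF pf(1) nn eq, of f u] Aval[of u "f u"] by (auto simp: M_def L_def mkL_def)
    have fm: "f \<in> M \<Longrightarrow> u \<in> S \<Longrightarrow> v \<in> S \<Longrightarrow> le u v \<Longrightarrow> le (f u) (f v)" for f u v
      by (auto simp: M_def increasing_maps_def)
    have bb: "le b b" "le d d" using pf(2) inS by auto
    have key: "(f b = d \<or> f d = b \<longrightarrow> f c = d) \<and> \<not> (f b = d \<and> f d = b)"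
      if f: "f \<in> M" "\<Lambda> f \<noteq> 0" for f
    proof -
      have "f c = d" if ft: "f b = d"
      proof -
        have "le d (f c)" using fm[OF f(1) inS(2,3) rel(1)] ft by simp
        hence "f c \<noteq> c" using rel by auto
        thus "f c = d" using tgt[OF f inS(3)] rel by auto
      qed
      moreover have "f c = d" if ft: "f d = b"
      proof -
        have "le (f a) b" using fm[OF f(1) inS(1,4) rel(5)] ft by simp
        hence "f a \<noteq> a" using rel by auto
        hence "f a = b" using tgt[OF f inS(1)] rel bb by auto
        hence "le b (f w)" using fm[OF f(1) inS(1,5) rel(3)] by simp
        hence "f w \<noteq> w" using rel by auto
        hence "f w = d" using tgt[OF f inS(5)] rel by auto
        hence "le d (f c)" using fm[OF f(1) inS(5,3) rel(4)] by simp
        hence "f c \<noteq> c" using rel by auto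
        thus "f c = d" using tgt[OF f inS(3)] rel by auto
      qed
      moreover have False if ft: "f b = d" "f d = b"
        using fm[OF f(1) inS(2,4) rel(2)] ft rel by simp
      ultimately show ?thesis by blast
    qed
    have ineq: "(\<Sum>f\<in>{f\<in>M. f b = d}. \<Lambda> f) + (\<Sum>f\<in>{f\<in>M. f d = b}. \<Lambda> f) \<le> (\<Sum>f\<in>{f\<in>M. f c = d}. \<Lambda> f)"
      by (rule sum_M_le[OF finM key]) (use nn M_def in auto)
    have ne: "b \<noteq> d" "c \<noteq> d" using rel bb by auto
    have v1: "L b d = 1" "L d b = 1" "L c d = 1"
      using ne bb rel by (auto simp: L_def mkL_def itemsA_def its_def)
    have "L b d + L d b \<le> L c d"
      using ineq eq inS ne unfolding M_def by simp
    thus False using v1 by simp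
  qed
  show ?thesis using gen sm nr by blast
qed



lemma up_dual: "up_set S (\<lambda>x y. le y x) G = down_set S le G"
  unfolding up_set_def down_set_def by (rule refl)
lemma down_dual: "down_set S (\<lambda>x y. le y x) G = up_set S le G"
  unfolding up_set_def down_set_def by (rule refl)

lemma sm_dual1: "stochastically_monotone S le L \<Longrightarrow> stochastically_monotone S (\<lambda>x y. le y x) L"
  unfolding stochastically_monotone_def up_dual[of S le] down_dual[of S le]
proof (elim conjE, intro conjI allI impI ballI)
  fix G x y
  assume d: "\<forall>G. down_set S le G \<longrightarrow> (\<forall>x\<in>S. \<forall>y\<in>S. le x y \<and> x \<notin> G \<longrightarrow> rate_to L y G \<le> rate_to L x G)"
    and "down_set S le G" "x \<in> S" "y \<in> S" "le y x \<and> y \<notin> G"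
  thus "rate_to L x G \<le> rate_to L y G" by blast
next
  fix G x y
  assume u: "\<forall>G. up_set S le G \<longrightarrow> (\<forall>x\<in>S. \<forall>y\<in>S. le x y \<and> y \<notin> G \<longrightarrow> rate_to L x G \<le> rate_to L y G)"
    and "up_set S le G" "x \<in> S" "y \<in> S" "le y x \<and> x \<notin> G"
  thus "rate_to L y G \<le> rate_to L x G" by blast
qed

lemma sm_dual2: "stochastically_monotone S (\<lambda>x y. le y x) L \<Longrightarrow> stochastically_monotone S le L"
  unfolding stochastically_monotone_def up_dual[of S le] down_dual[of S le]
proof (elim conjE, intro conjI allI impI ballI)
  fix G x y
  assume d: "\<forall>G. up_set S le G \<longrightarrow> (\<forall>x\<in>S. \<forall>y\<in>S. le y x \<and> x \<notin> G \<longrightarrow> rate_to L y G \<le> rate_to L x G)"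
    and "up_set S le G" "x \<in> S" "y \<in> S" "le x y \<and> y \<notin> G"
  thus "rate_to L x G \<le> rate_to L y G" by blast
next
  fix G x y
  assume u: "\<forall>G. down_set S le G \<longrightarrow> (\<forall>x\<in>S. \<forall>y\<in>S. le y x \<and> y \<notin> G \<longrightarrow> rate_to L x G \<le> rate_to L y G)"
    and "down_set S le G" "x \<in> S" "y \<in> S" "le x y \<and> x \<notin> G"
  thus "rate_to L y G \<le> rate_to L x G" by blast
qed

lemma im_dual: "increasing_maps S (\<lambda>x y. le y x) = increasing_maps S le"
  unfolding increasing_maps_def by blast

lemma rm_dual: "realizably_monotone S (\<lambda>x y. le y x) L = realizably_monotone S le L"
  unfolding realizably_monotone_def im_dual[of S le] ..

lemma fp_dual: "finite_poset S le \<Longrightarrow> finite_poset S (\<lambda>x y. le y x)"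
  unfolding finite_poset_def
proof (elim conjE, intro conjI ballI impI)
  fix x y z assume t: "\<forall>x\<in>S. \<forall>y\<in>S. \<forall>z\<in>S. le x y \<and> le y z \<longrightarrow> le x z"
    and "x \<in> S" "y \<in> S" "z \<in> S" "le y x \<and> le z y"
  thus "le z x" by blast
qed blast+

lemma copy_dual: "has_induced_copy S le (\<lambda>i j. P j i) \<Longrightarrow> has_induced_copy S (\<lambda>x y. le y x) P"
  unfolding has_induced_copy_def
proof (elim exE conjE)
  fix \<phi> assume "inj_on \<phi> {0..<5}" "\<phi> ` {0..<5} \<subseteq> S"
    and h: "\<forall>i\<in>{0..<5}. \<forall>j\<in>{0..<5}. le (\<phi> i) (\<phi> j) = P j i"
  moreover have "\<forall>i\<in>{0..<5}. \<forall>j\<in>{0..<5}. le (\<phi> j) (\<phi> i) = P i j"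
  proof (intro ballI)
    fix i j :: nat assume "i \<in> {0..<5}" "j \<in> {0..<5}"
    thus "le (\<phi> j) (\<phi> i) = P i j" using h by simp
  qed
  ultimately show "\<exists>\<phi>. inj_on \<phi> {0..<5} \<and> \<phi> ` {0..<5} \<subseteq> S \<and>
      (\<forall>i\<in>{0..<5}. \<forall>j\<in>{0..<5}. le (\<phi> j) (\<phi> i) = P i j)" by (intro exI[of _ \<phi>] conjI)
qed



lemma core:
  assumes po: "finite_poset S le" and R: "R \<in> {P1_strict, P2_strict, P3_strict, P4_strict, P5_strict}"
    and cp: "has_induced_copy S le (le_of R)"
  shows "\<exists>L. generator S L \<and> stochastically_monotone S le L \<and> \<not> realizably_monotone S le L"
proof -
  obtain \<phi> where inj: "inj_on \<phi> {0..<5}" and im: "\<phi> ` {0..<5} \<subseteq> S"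
    and h: "\<forall>i\<in>{0..<5}. \<forall>j\<in>{0..<5}. le (\<phi> i) (\<phi> j) \<longleftrightarrow> le_of R i j"
    using cp unfolding has_induced_copy_def by blast
  have hh: "\<And>i j. i < 5 \<Longrightarrow> j < 5 \<Longrightarrow> le (\<phi> i) (\<phi> j) = le_of R i j" using h by auto
  have inS: "\<phi> 0 \<in> S" "\<phi> 1 \<in> S" "\<phi> 2 \<in> S" "\<phi> 3 \<in> S" "\<phi> 4 \<in> S" using im by auto
  consider "R = P1_strict" | "R = P2_strict" | "R = P3_strict" | "R = P4_strict" | "R = P5_strict"
    using R by blast
  then show ?thesis
  proof cases
    case 1
    show ?thesis
      by (rule gadgetG[OF po inS(1,3,4,2,5)]) (simp_all add: hh le_of_def 1 P1_strict_def)
  next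
    case 2
    show ?thesis
      by (rule gadget2[OF po inS(1,2,3,4,5)]) (simp_all add: hh le_of_def 2 P2_strict_def)
  next
    case 3
    show ?thesis
      by (rule gadget3[OF po inS(1,2,3,4,5)]) (simp_all add: hh le_of_def 3 P3_strict_def)
  next
    case 4
    show ?thesis
      by (rule gadget4[OF po inS(1,2,3,4,5)]) (simp_all add: hh le_of_def 4 P4_strict_def)
  next
    case 5
    show ?thesis
      by (rule gadgetG[OF po inS(1,3,4,2,5)]) (simp_all add: hh le_of_def 5 P5_strict_def)
  qed
qed

theorem proposition4p2:
  fixes S :: "'a set" and le :: "'a \<Rightarrow> 'a \<Rightarrow> bool"
  assumes "finite_poset S le"
    and "\<exists>R\<in>{P1_strict, P2_strict, P3_strict, P4_strict, P5_strict}.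
           has_induced_copy_or_dual S le (le_of R)"
  shows "\<exists>L. generator S L \<and> stochastically_monotone S le L \<and>
             \<not> realizably_monotone S le L"
proof -
  from assms(2) obtain R where R: "R \<in> {P1_strict, P2_strict, P3_strict, P4_strict, P5_strict}"
    and c: "has_induced_copy_or_dual S le (le_of R)" by (rule bexE)
  show ?thesis
  proof (cases "has_induced_copy S le (le_of R)")
    case True
    show ?thesis by (rule core[OF assms(1) R True])
  next
    case False
    have c2: "has_induced_copy S le (\<lambda>i j. le_of R j i)"
      using c False unfolding has_induced_copy_or_dual_def by (elim disjE) (rule FalseE, erule notE, assumption, assumption)
    have c3: "has_induced_copy S (\<lambda>x y. le y x) (le_of R)"
      by (rule copy_dual[OF c2])
    have "\<exists>L. generator S L \<and> stochastically_monotone S (\<lambda>x y. le y x) L \<and>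
        \<not> realizably_monotone S (\<lambda>x y. le y x) L"
      by (rule core[OF fp_dual[OF assms(1)] R c3])
    then obtain L where L: "generator S L \<and> stochastically_monotone S (\<lambda>x y. le y x) L \<and>
        \<not> realizably_monotone S (\<lambda>x y. le y x) L" ..
    have g: "generator S L" using L by (rule conjunct1)
    have s: "stochastically_monotone S (\<lambda>x y. le y x) L" using L by (elim conjE)
    have r: "\<not> realizably_monotone S (\<lambda>x y. le y x) L" using L by (elim conjE)
    have s': "stochastically_monotone S le L" by (rule sm_dual2[OF s])
    have r': "\<not> realizably_monotone S le L"
    proof
      assume "realizably_monotone S le L"
      hence "realizably_monotone S (\<lambda>x y. le y x) L" by (rule rm_dual[of S le L, THEN iffD2])
      thus False using r by (rule notE[rotated])
    qed
    show ?thesis by (intro exI[of _ L] conjI g s' r')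
  qed
qed


end
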